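(* Let $(J,\mathcal F)$ and $w^S_j>0$ be as in the context, and assume $w^S_j\le w^T_j$ whenever $j\in S\subset T$ with $S,T\in\mathcal F$. Let $\mathbf c$ be $\mathcal F$-admissible and let $\mathrm{AG}_2$ on input $\mathbf c$ produce $\boldsymbol\pi$, $\boldsymbol\nu$, $S_k$, $\nu^{S_k}_j$. Then (a) for $1\le k\le n-1$, $\nu^{S_k}_j\le\nu^{S_{k+1}}_j$ for all $j\in S_{k+1}$; (b) for $1\le k<l\le n$, $$\nu_{\pi_k}=\nu^{S_k}_{\pi_k}\le\nu^{S_k}_{\pi_l}\le\nu^{S_{k+1}}_{\pi_l}\le\cdots\le\nu^{S_{l-1}}_{\pi_l}\le\nu^{S_l}_{\pi_l}=\nu_{\pi_l}.$$
   Context: $J$ finite, $|J|=n$; $\mathcal F\subseteq2^J$ with $\emptyset\in\mathcal F$, each nonempty $S\in\mathcal F$ having nonempty $\partial^-S=\{j\in S:S\setminus\{j\}\in\mathcal F\}$, each $S\in\mathcal F\ne J$ having $j\notin S$ with $S\cup\{j\}\in\mathcal F$. Coefficients $w^S_j>0$ for $j\in S\in\mathcal F$. $\mathrm{AG}_2$ on input $\mathbf c$: $S_1=J$, $\nu^{S_1}_j=c_j/w^{S_1}_j$, $\pi_1\in\arg\min\{\nu^{S_1}_j:j\in\partial^-S_1\}$, $\nu_{\pi_1}=\nu^{S_1}_{\pi_1}$; for $k=2..n$: $S_k=S_{k-1}\setminus\{\pi_{k-1}\}$, $\nu^{S_k}_j=\nu^{S_{k-1}}_j+(w^{S_{k-1}}_j/w^{S_k}_j-1)[\nu^{S_{k-1}}_j-\nu^{S_{k-1}}_{\pi_{k-1}}]$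 ($j\in S_k$), $\pi_k\in\arg\min\{\nu^{S_k}_j:j\in\partial^-S_k\}$, $\nu_{\pi_k}=\nu^{S_k}_{\pi_k}$. $\mathbf c$ is $\mathcal F$-admissible if $\nu_{\pi_1}\le\cdots\le\nu_{\pi_n}$. *)

theory Defs
  imports Complex_Main
begin

definition lower_boundary :: "'a set set \<Rightarrow> 'a set \<Rightarrow> 'a set" where
  "lower_boundary F S = {j \<in> S. S - {j} \<in> F}"

definition set_system :: "'a set \<Rightarrow> 'a set set \<Rightarrow> bool" where
  "set_system J F \<longleftrightarrow> finite J \<and> F \<subseteq> Pow J \<and> {} \<in> F \<and>
     (\<forall>S\<in>F. S \<noteq> {} \<longrightarrow> lower_boundary F S \<noteq> {}) \<and>
     (\<forall>S\<in>F. S \<noteq> J \<longrightarrow> (\<exists>j\<in>J - S. insert j S \<in> F))"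

text \<open>A run of algorithm AG2 on input c with coefficients w.
  Steps are indexed 1..n with n = card J; S k is S_k, nu k j is nu^{S_k}_j,
  p k is p k = pi_k (any tie-breaking in the argmin is allowed).\<close>
definition AG2_run ::
  "'a set \<Rightarrow> 'a set set \<Rightarrow> ('a set \<Rightarrow> 'a \<Rightarrow> real) \<Rightarrow> ('a \<Rightarrow> real)
    \<Rightarrow> (nat \<Rightarrow> 'a set) \<Rightarrow> (nat \<Rightarrow> 'a \<Rightarrow> real) \<Rightarrow> (nat \<Rightarrow> 'a) \<Rightarrow> bool" where
  "AG2_run J F w c S nu p \<longleftrightarrow>
     S 1 = J \<and>
     (\<forall>j\<in>J. nu 1 j = c j / w J j) \<and>
     (\<forall>k\<in>{2..card J}. S k = S (k - 1) - {p (k - 1)} \<and>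
        (\<forall>j\<in>S k. nu k j = nu (k - 1) j
            + (w (S (k - 1)) j / w (S k) j - 1) * (nu (k - 1) j - nu (k - 1) (p (k - 1))))) \<and>
     (\<forall>k\<in>{1..card J}. p k \<in> lower_boundary F (S k) \<and>
        (\<forall>j\<in>lower_boundary F (S k). nu k (p k) \<le> nu k j))"

definition AG2_admissible_run :: "nat \<Rightarrow> (nat \<Rightarrow> 'a \<Rightarrow> real) \<Rightarrow> (nat \<Rightarrow> 'a) \<Rightarrow> bool" where
  "AG2_admissible_run n nu p \<longleftrightarrow>
     (\<forall>k l. 1 \<le> k \<longrightarrow> k \<le> l \<longrightarrow> l \<le> n \<longrightarrow> nu k (p k) \<le> nu l (p l))"

end

theory Submission
  imports Defs
begin

lemma J_in_F_aux:
  assumes sys: "set_system J F"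
  shows "S \<in> F \<Longrightarrow> card (J - S) = d \<Longrightarrow> J \<in> F"
proof (induction d arbitrary: S)
  case 0
  have fin: "finite J" "S \<subseteq> J" using sys 0 unfolding set_system_def by auto
  then have "J - S = {}" using 0 by auto
  then have "S = J" using fin by auto
  then show ?case using 0 by simp
next
  case (Suc d)
  have fin: "finite J" "S \<subseteq> J" using sys Suc unfolding set_system_def by auto
  have "S \<noteq> J" using Suc by auto
  then obtain j where j: "j \<in> J - S" "insert j S \<in> F"
    using sys Suc.prems(1) unfolding set_system_def by blast
  have "J - insert j S = (J - S) - {j}" by auto
  then have "card (J - insert j S) = d" using j fin Suc.prems(2) by simp
  then show ?case using Suc.IH j by blast
qed

lemma J_in_F: "set_system J F \<Longrightarrow> J \<in> F"
  using J_in_F_aux[of J F "{}"] unfolding set_system_def by blast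

theorem lemma4:
  fixes J :: "'a set" and F :: "'a set set" and w :: "'a set \<Rightarrow> 'a \<Rightarrow> real"
    and c :: "'a \<Rightarrow> real" and S :: "nat \<Rightarrow> 'a set" and nu :: "nat \<Rightarrow> 'a \<Rightarrow> real"
    and p :: "nat \<Rightarrow> 'a"
  assumes sys: "set_system J F"
    and wpos: "\<forall>T\<in>F. \<forall>j\<in>T. w T j > 0"
    and wmono: "\<forall>A\<in>F. \<forall>B\<in>F. \<forall>j. j \<in> A \<longrightarrow> A \<subset> B \<longrightarrow> w A j \<le> w B j"
    and run: "AG2_run J F w c S nu p"
    and adm: "AG2_admissible_run (card J) nu p"
  shows "(\<forall>k. 1 \<le> k \<and> k \<le> card J - 1 \<longrightarrow> (\<forall>j\<in>S (k + 1). nu k j \<le> nu (k + 1) j))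
       \<and> (\<forall>k l. 1 \<le> k \<and> k < l \<and> l \<le> card J \<longrightarrow>
            nu k (p k) \<le> nu k (p l) \<and>
            (\<forall>m. k \<le> m \<and> m < l \<longrightarrow> nu m (p l) \<le> nu (m + 1) (p l)))"
proof -
  define n where "n = card J"
  have finJ: "finite J" and FJ: "F \<subseteq> Pow J" using sys unfolding set_system_def by auto
  have S1: "S 1 = J" using run unfolding AG2_run_def by auto
  have Sstep: "S (m+1) = S m - {p m}"
    "\<forall>j\<in>S (m+1). nu (m+1) j = nu m j + (w (S m) j / w (S (m+1)) j - 1) * (nu m j - nu m (p m))"
    if "1 \<le> m" "m < n" for m
  proof -
    have "Suc m \<in> {2..card J}" using that n_def by auto
    then show "S (m+1) = S m - {p m}"
      "\<forall>j\<in>S (m+1). nu (m+1) j = nu m j + (w (S m) j / w (S (m+1)) j - 1) * (nu m j - nu m (p m))"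
      using run unfolding AG2_run_def by auto
  qed
  have pk: "p k \<in> lower_boundary F (S k)" "\<forall>j\<in>lower_boundary F (S k). nu k (p k) \<le> nu k j"
    if "1 \<le> k" "k \<le> n" for k
    using run that unfolding AG2_run_def n_def by auto
  have pkS: "p k \<in> S k" "S k - {p k} \<in> F" if "1 \<le> k" "k \<le> n" for k
    using pk(1)[OF that] unfolding lower_boundary_def by auto
  have F1: "1 \<le> k \<longrightarrow> k \<le> n \<longrightarrow> S k \<in> F" for k
  proof (induction k)
    case 0 then show ?case by simp
  next
    case (Suc k)
    show ?case
    proof (cases "k = 0")
      case True then show ?thesis using S1 J_in_F[OF sys] by simp
    next
      case False
      then show ?thesis using Suc Sstep(1)[of k] pkS(2)[of k] by auto
    qed
  qed
  have step: "\<exists>r\<ge>0. nu (m+1) j = nu m j + r * (nu m j - nu m (p m))"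
    if "1 \<le> m" "m < n" "j \<in> S (m+1)" for m j
  proof -
    have A: "S (m+1) \<in> F" "S m \<in> F" using F1 that by auto
    have sub: "S (m+1) \<subset> S m" using Sstep(1)[OF that(1,2)] pkS(1)[of m] that by auto
    have "w (S (m+1)) j \<le> w (S m) j" using wmono A sub that(3) by blast
    moreover have "w (S (m+1)) j > 0" using wpos A that(3) by blast
    ultimately have "w (S m) j / w (S (m+1)) j - 1 \<ge> 0" by (simp add: field_simps)
    then show ?thesis using Sstep(2)[OF that(1,2)] that(3) by blast
  qed
  have F2: "S (m + d) \<subseteq> S m" if "1 \<le> m" "m + d \<le> n" for m d
    using that
  proof (induction d)
    case 0 then show ?case by simp
  next
    case (Suc d)
    then have "S (m + d + 1) = S (m+d) - {p (m+d)}" using Sstep(1)[of "m+d"] by auto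
    then show ?case using Suc by auto
  qed
  have F2': "p l \<in> S m" if "1 \<le> m" "m \<le> l" "l \<le> n" for m l
    using F2[of m "l - m"] pkS(1)[of l] that by auto
  have F4a: "d < l \<longrightarrow> nu (l-d) (p (l-d)) \<le> nu (l-d) (p l)" if "l \<le> n" for l d
  proof (induction d)
    case 0 then show ?case by simp
  next
    case (Suc d)
    show ?case
    proof
      assume dl: "Suc d < l"
      define m where "m = l - Suc d"
      have m1: "1 \<le> m" "m < n" "m + 1 = l - d" using dl that unfolding m_def by auto
      have IH: "nu (m+1) (p (m+1)) \<le> nu (m+1) (p l)" using Suc dl m1(3) by simp
      have plS: "p l \<in> S (m+1)" using F2'[of "m+1" l] m1 that by simp
      obtain r where r: "r \<ge> 0" "nu (m+1) (p l) = nu m (p l) + r * (nu m (p l) - nu m (p m))"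
        using step[OF m1(1,2) plS] by blast
      have ad: "nu m (p m) \<le> nu (m+1) (p (m+1))"
        using adm m1 unfolding AG2_admissible_run_def n_def by auto
      show "nu (l - Suc d) (p (l - Suc d)) \<le> nu (l - Suc d) (p l)"
      proof (rule ccontr)
        assume "\<not> ?thesis"
        then have lt: "nu m (p l) < nu m (p m)" unfolding m_def by simp
        then have "r * (nu m (p l) - nu m (p m)) \<le> 0"
          using r(1) by (simp add: mult_nonneg_nonpos)
        then show False using lt r(2) IH ad by linarith
      qed
    qed
  qed
  have F4: "nu m (p m) \<le> nu m (p l)" if "1 \<le> m" "m \<le> l" "l \<le> n" for m l
    using F4a[of l "l - m"] that by auto
  have F5a: "d < n \<longrightarrow> S (n - d) \<subseteq> p ` {n-d..n}" for d
  proof (induction d)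
    case 0
    show ?case
    proof
      assume "0 < n"
      have "card (S k) = n + 1 - k" if "1 \<le> k" "k \<le> n" for k
        using that
      proof (induction k)
        case 0 then show ?case by simp
      next
        case (Suc k)
        show ?case
        proof (cases "k = 0")
          case True then show ?thesis using S1 n_def by simp
        next
          case False
          have fk: "finite (S k)" using F1[of k] FJ finJ False Suc.prems
            by (meson Pow_iff Suc_leD finite_subset less_one not_le subsetD)
          have "card (S (k+1)) = card (S k) - 1"
            using Sstep(1)[of k] pkS(1)[of k] False Suc.prems fk by simp
          then show ?thesis using Suc False by simp
        qed
      qed
      then have "card (S n) = 1" using \<open>0 < n\<close> by simp
      then obtain x where "S n = {x}" using card_1_singletonE by blast
      moreover have "p n \<in> S n" using pkS(1)[of n] \<open>0 < n\<close> by simp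
      ultimately show "S (n - 0) \<subseteq> p ` {n-0..n}" by auto
    qed
  next
    case (Suc d)
    show ?case
    proof
      assume dl: "Suc d < n"
      define k where "k = n - Suc d"
      have k: "1 \<le> k" "k < n" "k + 1 = n - d" using dl unfolding k_def by auto
      have "S k \<subseteq> insert (p k) (S (k+1))" using Sstep(1)[OF k(1,2)] by auto
      also have "\<dots> \<subseteq> p ` {k..n}" using Suc dl k by auto
      finally show "S (n - Suc d) \<subseteq> p ` {n - Suc d..n}" unfolding k_def .
    qed
  qed
  have A: "\<forall>j\<in>S (k + 1). nu k j \<le> nu (k + 1) j" if kk: "1 \<le> k" "k \<le> n - 1" for k
  proof
    fix j assume j: "j \<in> S (k+1)"
    have k: "k < n" "k + 1 \<le> n" using kk j by (cases "n = 0"; auto simp: S1)+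
    have e: "n - (n - (k+1)) = k + 1" using k by simp
    have "n - (k+1) < n" using k by simp
    then have "S (n - (n - (k+1))) \<subseteq> p ` {n - (n - (k+1))..n}" using F5a[of "n - (k+1)"] by blast
    then have "S (k+1) \<subseteq> p ` {k+1..n}" unfolding e .
    then have "j \<in> p ` {k+1..n}" using j by blast
    then obtain l where l0: "l \<in> {k+1..n}" "j = p l" by (rule imageE) auto
    then have l: "k+1 \<le> l" "l \<le> n" "j = p l" by auto
    have le: "nu k (p k) \<le> nu k j" using F4[of k l] l kk by simp
    obtain r where r: "r \<ge> 0" "nu (k+1) j = nu k j + r * (nu k j - nu k (p k))"
      using step[OF kk(1) k(1) j] by blast
    have "r * (nu k j - nu k (p k)) \<ge> 0" using r(1) le by simp
    then show "nu k j \<le> nu (k + 1) j" using r(2) by linarith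
  qed
  show ?thesis
    unfolding n_def[symmetric]
  proof (intro conjI allI impI)
    fix k assume "1 \<le> k \<and> k \<le> n - 1"
    then show "\<forall>j\<in>S (k + 1). nu k j \<le> nu (k + 1) j" using A by blast
  next
    fix k l assume a: "1 \<le> k \<and> k < l \<and> l \<le> n"
    then show "nu k (p k) \<le> nu k (p l)" using F4 by simp
    fix m assume m: "k \<le> m \<and> m < l"
    {
      have "p l \<in> S (m+1)" using F2'[of "m+1" l] a m by simp
      moreover have "1 \<le> m" "m \<le> n - 1" using a m by auto
      ultimately show "nu m (p l) \<le> nu (m + 1) (p l)" using A[of m] by blast
    }
  qed
qed

end
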